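(* Let $\Sigma$ be a Hamiltonian surface in the Brady complex $X$. Then for every vertex $x$ of $X$, the Hamiltonian cycle $\Sigma\cap L_x$ of the link $L_x$ is of type 3.
   Context: The Brady complex $X$ is the simply connected CAT(0) piecewise Euclidean 2-complex (constructed by T. Brady) on which $\mathrm{Aut}(F_2)$ acts properly and cocompactly by cellular isometries, transitively on vertices. Its closed 2-cells (faces) are unit equilateral triangles and unit lozenges (rhombi with angles $\pi/3$ and $2\pi/3$); every edge lies in exactly one triangle and two lozenges. The link $L_x$ of a vertex $x$ is the graph whose vertices are the edges of $X$ at $x$ and whose edges are the corners at $x$ of faces containing $x$; a link edge is labeled $t$ (triangle corner), $\ell$ (lozenge corner of angle $\pi/3$) or $\mathcal{L}$ (lozenge corner of angle $2\pi/3$). Each labeled $L_x$ is isomorphic to the Moebius ladder with vertices $u_0,\dots,u_3,w_0,\dots,w_3$, rungs $u_iw_i$ labeled $\mathcal{L}$, horizontal edges $u_0u_1,u_2u_3,w_0w_1,w_2w_3$ labeled $\ell$ and $u_1u_2,u_3w_0,w_1w_2,w_3u_0$ labeled $t$. Its Hamiltonian cycles are: type 1, the unique one with no rung; and those containing exactly two rungs joined by two horizontal paths of three edges each, which are of type 2 if these paths are labeled $\ell,t,\ell$ and of type 3 if they are labeled $t,\ell,t$. A Hamiltonian surface in $X$ is a connected union $\Sigma$ of closed faces which is a surface without boundary, contains every vertex and every edge of $X$, and has no multiple vertex; for each vertex $x$, $\Sigma\cap L_x$ (the corners of faces of $\Sigma$ at $x$) is a Hamiltonian cycle of $L_x$.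 *)

theory Defs
  imports Main
begin

text \<open>Combinatorial model of a piecewise Euclidean 2-complex whose closed 2-cells are
unit equilateral triangles and unit lozenges.  A lozenge is given by
the pair (A, B) of its two diagonals: A is the pair of vertices with angle pi/3 (acute),
B the pair of vertices with angle 2pi/3 (obtuse); its sides are the four pairs {a,o}.\<close>

datatype 'v face = Tri "'v set" | Loz "'v set" "'v set"

record 'v cplx =
  verts :: "'v set"
  edgs  :: "'v set set"
  facs  :: "'v face set"

datatype lab = Lt | Ll | LL
  (* Lt: triangle corner; Ll: lozenge corner of angle pi/3; LL: lozenge corner of angle 2pi/3 *)

fun fverts :: "'v face \<Rightarrow> 'v set" where
  "fverts (Tri T) = T"
| "fverts (Loz A B) = A \<union> B"

fun is_side :: "'v set \<Rightarrow> 'v face \<Rightarrow> bool" where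
  "is_side e (Tri T) = (e \<subseteq> T \<and> card e = 2)"
| "is_side e (Loz A B) = (\<exists>a\<in>A. \<exists>b\<in>B. e = {a, b})"

text \<open>The corner at vertex x of a face containing x: the two edges of the face at x
(a vertex pair of the link) and its label.\<close>
fun corner_edges :: "'v \<Rightarrow> 'v face \<Rightarrow> 'v set set" where
  "corner_edges x (Tri T) = (\<lambda>y. {x, y}) ` (T - {x})"
| "corner_edges x (Loz A B) =
     (if x \<in> A then (\<lambda>y. {x, y}) ` B else (\<lambda>y. {x, y}) ` A)"

fun corner_label :: "'v \<Rightarrow> 'v face \<Rightarrow> lab" where
  "corner_label x (Tri T) = Lt"
| "corner_label x (Loz A B) = (if x \<in> A then Ll else LL)"

definition edges_at :: "'v cplx \<Rightarrow> 'v \<Rightarrow> 'v set set" where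
  "edges_at C x = {e \<in> edgs C. x \<in> e}"

definition faces_at :: "'v face set \<Rightarrow> 'v \<Rightarrow> 'v face set" where
  "faces_at F x = {f \<in> F. x \<in> fverts f}"

text \<open>The labeled Moebius ladder: u_i = i, w_i = 4 + i (i < 4).\<close>
definition ladder_edges :: "(nat set \<times> lab) set" where
  "ladder_edges =
    {({0,4}, LL), ({1,5}, LL), ({2,6}, LL), ({3,7}, LL),
     ({0,1}, Ll), ({2,3}, Ll), ({4,5}, Ll), ({6,7}, Ll),
     ({1,2}, Lt), ({3,4}, Lt), ({5,6}, Lt), ({7,0}, Lt)}"

text \<open>The labeled link L_x (vertices: edges at x; link edges: corners at x of faces,
as a multigraph indexed by the faces) is isomorphic to the labeled Moebius ladder.\<close>
definition link_is_ladder :: "'v cplx \<Rightarrow> 'v \<Rightarrow> bool" where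
  "link_is_ladder C x \<longleftrightarrow>
     (\<exists>\<phi>. bij_betw \<phi> (edges_at C x) {0..<8::nat} \<and>
          bij_betw (\<lambda>f. (\<phi> ` corner_edges x f, corner_label x f))
                   (faces_at (facs C) x) ladder_edges)"

definition wf_cplx :: "'v cplx \<Rightarrow> bool" where
  "wf_cplx C \<longleftrightarrow>
     (\<forall>e\<in>edgs C. e \<subseteq> verts C \<and> card e = 2) \<and>
     (\<forall>f\<in>facs C. case f of
         Tri T \<Rightarrow> T \<subseteq> verts C \<and> card T = 3 \<and> (\<forall>e. e \<subseteq> T \<and> card e = 2 \<longrightarrow> e \<in> edgs C)
       | Loz A B \<Rightarrow> A \<union> B \<subseteq> verts C \<and> card A = 2 \<and> card B = 2 \<and> A \<inter> B = {} \<and>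
                    (\<forall>a\<in>A. \<forall>b\<in>B. {a, b} \<in> edgs C))"

definition walk :: "'v cplx \<Rightarrow> 'v list \<Rightarrow> bool" where
  "walk C p \<longleftrightarrow> p \<noteq> [] \<and> set p \<subseteq> verts C \<and>
     (\<forall>i. Suc i < length p \<longrightarrow> {p ! i, p ! Suc i} \<in> edgs C)"

fun face_loop :: "'v face \<Rightarrow> 'v list \<Rightarrow> bool" where
  "face_loop (Tri T) p \<longleftrightarrow> length p = 4 \<and> p ! 0 = p ! 3 \<and> distinct (butlast p) \<and> set p = T"
| "face_loop (Loz A B) p \<longleftrightarrow> length p = 5 \<and> p ! 0 = p ! 4 \<and> distinct (butlast p) \<and>
     {{p ! 0, p ! 2}, {p ! 1, p ! 3}} = {A, B}"

definition htpy_step :: "'v cplx \<Rightarrow> ('v list \<times> 'v list) set" where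
  "htpy_step C =
     {(xs @ [a, b, a] @ ys, xs @ [a] @ ys) | xs ys a b. {a, b} \<in> edgs C} \<union>
     {(xs @ [a] @ ys, xs @ p @ ys) | xs ys a p f. f \<in> facs C \<and> face_loop f p \<and> hd p = a}"

definition homotopic :: "'v cplx \<Rightarrow> 'v list \<Rightarrow> 'v list \<Rightarrow> bool" where
  "homotopic C p q \<longleftrightarrow> (p, q) \<in> (htpy_step C \<union> (htpy_step C)\<inverse>)\<^sup>*"

definition simply_connected :: "'v cplx \<Rightarrow> bool" where
  "simply_connected C \<longleftrightarrow>
     verts C \<noteq> {} \<and>
     (\<forall>a\<in>verts C. \<forall>b\<in>verts C. \<exists>p. walk C p \<and> hd p = a \<and> last p = b) \<and>
     (\<forall>p. walk C p \<and> hd p = last p \<longrightarrow> homotopic C p [hd p])"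

text \<open>The Brady complex (characterised combinatorially: simply connected, unit triangles
and lozenges, every edge in exactly one triangle and two lozenges, every labeled link
isomorphic to the labeled Moebius ladder).\<close>
definition brady_complex :: "'v cplx \<Rightarrow> bool" where
  "brady_complex C \<longleftrightarrow>
     wf_cplx C \<and> simply_connected C \<and>
     (\<forall>e\<in>edgs C. card {T. Tri T \<in> facs C \<and> is_side e (Tri T)} = 1 \<and>
                  card {(A, B). Loz A B \<in> facs C \<and> is_side e (Loz A B)} = 2) \<and>
     (\<forall>x\<in>verts C. link_is_ladder C x)"

text \<open>Sigma cap L_x: the corners at x of faces of S; it is a single cycle
(surface without boundary at x, no multiple vertex): every link vertex it touches has
degree exactly 2, and it is connected.\<close>
definition link_single_cycle :: "'v face set \<Rightarrow> 'v \<Rightarrow> bool" where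
  "link_single_cycle S x \<longleftrightarrow>
     (let Sx = faces_at S x; Vx = \<Union> (corner_edges x ` Sx);
          R = {(e, e'). \<exists>f\<in>Sx. corner_edges x f = {e, e'}}
      in Vx \<noteq> {} \<and>
         (\<forall>e\<in>Vx. card {f\<in>Sx. e \<in> corner_edges x f} = 2) \<and>
         (\<forall>e\<in>Vx. \<forall>e'\<in>Vx. (e, e') \<in> R\<^sup>*))"

definition hamiltonian_surface :: "'v cplx \<Rightarrow> 'v face set \<Rightarrow> bool" where
  "hamiltonian_surface C S \<longleftrightarrow>
     S \<subseteq> facs C \<and> S \<noteq> {} \<and>
     (\<forall>f\<in>S. \<forall>g\<in>S. (f, g) \<in> {(f', g'). fverts f' \<inter> fverts g' \<noteq> {}}\<^sup>*) \<and>
     (\<forall>x\<in>verts C. \<exists>f\<in>S. x \<in> fverts f) \<and>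
     (\<forall>e\<in>edgs C. \<exists>f\<in>S. is_side e f) \<and>
     (\<forall>x\<in>verts C. link_single_cycle S x)"

definition link_adj :: "'v \<Rightarrow> 'v face \<Rightarrow> 'v face \<Rightarrow> bool" where
  "link_adj x f g \<longleftrightarrow> corner_edges x f \<inter> corner_edges x g \<noteq> {}"

definition type3 :: "'v face set \<Rightarrow> 'v \<Rightarrow> bool" where
  "type3 S x \<longleftrightarrow>
     (\<exists>r1 r2 a1 a2 a3 b1 b2 b3.
        faces_at S x = {r1, r2, a1, a2, a3, b1, b2, b3} \<and>
        distinct [r1, r2, a1, a2, a3, b1, b2, b3] \<and>
        corner_label x r1 = LL \<and> corner_label x r2 = LL \<and>
        corner_label x a1 = Lt \<and> corner_label x a2 = Ll \<and> corner_label x a3 = Lt \<and>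
        corner_label x b1 = Lt \<and> corner_label x b2 = Ll \<and> corner_label x b3 = Lt \<and>
        link_adj x r1 a1 \<and> link_adj x a1 a2 \<and> link_adj x a2 a3 \<and> link_adj x a3 r2 \<and>
        link_adj x r2 b1 \<and> link_adj x b1 b2 \<and> link_adj x b2 b3 \<and> link_adj x b3 r1)"

end

theory Submission
  imports Defs
begin

lemma lad_iff: "(P, c) \<in> ladder_edges \<longleftrightarrow> (P = {0,4} \<and> c = LL) \<or> (P = {1,5} \<and> c = LL) \<or> (P = {2,6} \<and> c = LL) \<or> (P = {3,7} \<and> c = LL) \<or>
   (P = {0,1} \<and> c = Ll) \<or> (P = {2,3} \<and> c = Ll) \<or> (P = {4,5} \<and> c = Ll) \<or> (P = {6,7} \<and> c = Ll) \<or>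
   (P = {1,2} \<and> c = Lt) \<or> (P = {3,4} \<and> c = Lt) \<or> (P = {5,6} \<and> c = Lt) \<or> (P = {7,0} \<and> c = Lt)"
  unfolding ladder_edges_def by (simp only: insert_iff prod.inject empty_iff simp_thms)

definition "ex2 a b c \<longleftrightarrow> (a\<and>b\<and>\<not>c)\<or>(a\<and>c\<and>\<not>b)\<or>(b\<and>c\<and>\<not>a)"

lemma bool_enum:
  assumes "ex2 r0 l01 t70" "ex2 r1 l01 t12" "ex2 r2 l23 t12" "ex2 r3 l23 t34"
    "ex2 r0 l45 t34" "ex2 r1 l45 t56" "ex2 r2 l67 t56" "ex2 r3 l67 t70"
    "t12 \<or> t34 \<or> t56 \<or> t70" "l01 \<or> l23 \<or> l45 \<or> l67"
  shows "(\<not>r0 \<and> \<not>r1 \<and> \<not>r2 \<and> \<not>r3 \<and> l01 \<and> l23 \<and> l45 \<and> l67 \<and> t12 \<and> t34 \<and> t56 \<and> t70) \<or>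
         (\<not>r0 \<and> r1 \<and> r2 \<and> \<not>r3 \<and> l01 \<and> l23 \<and> l45 \<and> l67 \<and> \<not>t12 \<and> t34 \<and> \<not>t56 \<and> t70) \<or>
         (r0 \<and> \<not>r1 \<and> \<not>r2 \<and> r3 \<and> l01 \<and> l23 \<and> l45 \<and> l67 \<and> t12 \<and> \<not>t34 \<and> t56 \<and> \<not>t70) \<or>
         (r0 \<and> r1 \<and> \<not>r2 \<and> \<not>r3 \<and> \<not>l01 \<and> l23 \<and> \<not>l45 \<and> l67 \<and> t12 \<and> t34 \<and> t56 \<and> t70) \<or>
         (\<not>r0 \<and> \<not>r1 \<and> r2 \<and> r3 \<and> l01 \<and> \<not>l23 \<and> l45 \<and> \<not>l67 \<and> t12 \<and> t34 \<and> t56 \<and> t70)"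
  using assms unfolding ex2_def by sat

definition CY1 :: "(nat set \<times> lab) set" where "CY1 = {({0,1},Ll),({2,3},Ll),({4,5},Ll),({6,7},Ll),({1,2},Lt),({3,4},Lt),({5,6},Lt),({7,0},Lt)}"
definition CY2a :: "(nat set \<times> lab) set" where "CY2a = {({1,5},LL),({2,6},LL),({0,1},Ll),({2,3},Ll),({4,5},Ll),({6,7},Ll),({3,4},Lt),({7,0},Lt)}"
definition CY2b :: "(nat set \<times> lab) set" where "CY2b = {({0,4},LL),({3,7},LL),({0,1},Ll),({2,3},Ll),({4,5},Ll),({6,7},Ll),({1,2},Lt),({5,6},Lt)}"
definition CY3a :: "(nat set \<times> lab) set" where "CY3a = {({0,4},LL),({1,5},LL),({3,4},Lt),({2,3},Ll),({1,2},Lt),({5,6},Lt),({6,7},Ll),({7,0},Lt)}"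
definition CY3b :: "(nat set \<times> lab) set" where "CY3b = {({2,6},LL),({3,7},LL),({5,6},Lt),({4,5},Ll),({3,4},Lt),({7,0},Lt),({0,1},Ll),({1,2},Lt)}"

lemma card2:
  assumes "card (H \<inter> S) = 2" "S = {a,b,c}" "a \<noteq> b" "a \<noteq> c" "b \<noteq> c"
  shows "ex2 (a\<in>H) (b\<in>H) (c\<in>H)"
  using assms by (cases "a\<in>H"; cases "b\<in>H"; cases "c\<in>H"; simp add: ex2_def Int_insert_right card_insert_if)

lemma enum:
  assumes sub: "H \<subseteq> ladder_edges" and deg: "\<forall>i<8. card {h\<in>H. i \<in> fst h} = (2::nat)"
    and t: "\<exists>h\<in>H. snd h = Lt" and l: "\<exists>h\<in>H. snd h = Ll"
  shows "H = CY1 \<or> H = CY2a \<or> H = CY2b \<or> H = CY3a \<or> H = CY3b"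
proof -
  have st: "{h\<in>H. i \<in> fst h} = H \<inter> {h\<in>ladder_edges. i \<in> fst h}" for i using sub by auto
  have d: "card (H \<inter> {h\<in>ladder_edges. i \<in> fst h}) = 2" if "i < 8" for i using deg that st by auto
  have s0: "{h\<in>ladder_edges. 0 \<in> fst h} = {({0,4},LL),({0,1},Ll),({7,0},Lt)}" by (rule set_eqI, case_tac x, simp only: mem_Collect_eq fst_conv lad_iff insert_iff prod.inject empty_iff simp_thms,
   rule iffI; (elim disjE conjE; hypsubst; simp add: doubleton_eq_iff))
  have s1: "{h\<in>ladder_edges. 1 \<in> fst h} = {({1,5},LL),({0,1},Ll),({1,2},Lt)}" by (rule set_eqI, case_tac x, simp only: mem_Collect_eq fst_conv lad_iff insert_iff prod.inject empty_iff simp_thms,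
   rule iffI; (elim disjE conjE; hypsubst; simp add: doubleton_eq_iff))
  have s2: "{h\<in>ladder_edges. 2 \<in> fst h} = {({2,6},LL),({2,3},Ll),({1,2},Lt)}" by (rule set_eqI, case_tac x, simp only: mem_Collect_eq fst_conv lad_iff insert_iff prod.inject empty_iff simp_thms,
   rule iffI; (elim disjE conjE; hypsubst; simp add: doubleton_eq_iff))
  have s3: "{h\<in>ladder_edges. 3 \<in> fst h} = {({3,7},LL),({2,3},Ll),({3,4},Lt)}" by (rule set_eqI, case_tac x, simp only: mem_Collect_eq fst_conv lad_iff insert_iff prod.inject empty_iff simp_thms,
   rule iffI; (elim disjE conjE; hypsubst; simp add: doubleton_eq_iff))
  have s4: "{h\<in>ladder_edges. 4 \<in> fst h} = {({0,4},LL),({4,5},Ll),({3,4},Lt)}" by (rule set_eqI, case_tac x, simp only: mem_Collect_eq fst_conv lad_iff insert_iff prod.inject empty_iff simp_thms,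
   rule iffI; (elim disjE conjE; hypsubst; simp add: doubleton_eq_iff))
  have s5: "{h\<in>ladder_edges. 5 \<in> fst h} = {({1,5},LL),({4,5},Ll),({5,6},Lt)}" by (rule set_eqI, case_tac x, simp only: mem_Collect_eq fst_conv lad_iff insert_iff prod.inject empty_iff simp_thms,
   rule iffI; (elim disjE conjE; hypsubst; simp add: doubleton_eq_iff))
  have s6: "{h\<in>ladder_edges. 6 \<in> fst h} = {({2,6},LL),({6,7},Ll),({5,6},Lt)}" by (rule set_eqI, case_tac x, simp only: mem_Collect_eq fst_conv lad_iff insert_iff prod.inject empty_iff simp_thms,
   rule iffI; (elim disjE conjE; hypsubst; simp add: doubleton_eq_iff))
  have s7: "{h\<in>ladder_edges. 7 \<in> fst h} = {({3,7},LL),({6,7},Ll),({7,0},Lt)}" by (rule set_eqI, case_tac x, simp only: mem_Collect_eq fst_conv lad_iff insert_iff prod.inject empty_iff simp_thms,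
   rule iffI; (elim disjE conjE; hypsubst; simp add: doubleton_eq_iff))
  have e0: "ex2 (({0,4},LL)\<in>H) (({0,1},Ll)\<in>H) (({7,0},Lt)\<in>H)"
    by (rule card2[OF d[of 0] s0]) (simp_all add: doubleton_eq_iff)
  have e1: "ex2 (({1,5},LL)\<in>H) (({0,1},Ll)\<in>H) (({1,2},Lt)\<in>H)"
    by (rule card2[OF d[of 1] s1]) (simp_all add: doubleton_eq_iff)
  have e2: "ex2 (({2,6},LL)\<in>H) (({2,3},Ll)\<in>H) (({1,2},Lt)\<in>H)"
    by (rule card2[OF d[of 2] s2]) (simp_all add: doubleton_eq_iff)
  have e3: "ex2 (({3,7},LL)\<in>H) (({2,3},Ll)\<in>H) (({3,4},Lt)\<in>H)"
    by (rule card2[OF d[of 3] s3]) (simp_all add: doubleton_eq_iff)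
  have e4: "ex2 (({0,4},LL)\<in>H) (({4,5},Ll)\<in>H) (({3,4},Lt)\<in>H)"
    by (rule card2[OF d[of 4] s4]) (simp_all add: doubleton_eq_iff)
  have e5: "ex2 (({1,5},LL)\<in>H) (({4,5},Ll)\<in>H) (({5,6},Lt)\<in>H)"
    by (rule card2[OF d[of 5] s5]) (simp_all add: doubleton_eq_iff)
  have e6: "ex2 (({2,6},LL)\<in>H) (({6,7},Ll)\<in>H) (({5,6},Lt)\<in>H)"
    by (rule card2[OF d[of 6] s6]) (simp_all add: doubleton_eq_iff)
  have e7: "ex2 (({3,7},LL)\<in>H) (({6,7},Ll)\<in>H) (({7,0},Lt)\<in>H)"
    by (rule card2[OF d[of 7] s7]) (simp_all add: doubleton_eq_iff)
  have tt: "({1,2},Lt)\<in>H \<or> ({3,4},Lt)\<in>H \<or> ({5,6},Lt)\<in>H \<or> ({7,0},Lt)\<in>H"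
  proof -
    from t obtain P c where "(P,c) \<in> H" "c = Lt" by auto
    moreover then have "(P,c) \<in> ladder_edges" using sub by auto
    ultimately show ?thesis unfolding lad_iff by (simp only: lab.distinct simp_thms) (elim disjE conjE; hypsubst; simp)
  qed
  have ll: "({0,1},Ll)\<in>H \<or> ({2,3},Ll)\<in>H \<or> ({4,5},Ll)\<in>H \<or> ({6,7},Ll)\<in>H"
  proof -
    from l obtain P c where "(P,c) \<in> H" "c = Ll" by auto
    moreover then have "(P,c) \<in> ladder_edges" using sub by auto
    ultimately show ?thesis unfolding lad_iff by (simp only: lab.distinct simp_thms) (elim disjE conjE; hypsubst; simp)
  qed
  have eqI: "H = X" if "X \<subseteq> ladder_edges" "\<forall>h\<in>ladder_edges. h \<in> H \<longleftrightarrow> h \<in> X" for X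
    using that sub by blast
  from bool_enum[OF e0 e1 e2 e3 e4 e5 e6 e7 tt ll] show ?thesis
    apply (elim disjE)
    subgoal apply (rule disjI1, rule eqI) unfolding CY1_def ladder_edges_def by (simp_all add: doubleton_eq_iff)
    subgoal apply (rule disjI2, rule disjI1, rule eqI) unfolding CY2a_def ladder_edges_def by (simp_all add: doubleton_eq_iff)
    subgoal apply (rule disjI2, rule disjI2, rule disjI1, rule eqI) unfolding CY2b_def ladder_edges_def by (simp_all add: doubleton_eq_iff)
    subgoal apply (rule disjI2, rule disjI2, rule disjI2, rule disjI1, rule eqI) unfolding CY3a_def ladder_edges_def by (simp_all add: doubleton_eq_iff)
    subgoal apply (rule disjI2, rule disjI2, rule disjI2, rule disjI2, rule eqI) unfolding CY3b_def ladder_edges_def by (simp_all add: doubleton_eq_iff)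
    done
qed

definition "CYS = {CY1, CY2a, CY2b, CY3a, CY3b}"

lemma LB:
  assumes "H \<in> CYS" "(P,Ll) \<in> ladder_edges" "i \<in> P" "(P,Ll) \<notin> H" "({i,j},Lt) \<in> ladder_edges"
    "(Q,LL) \<in> ladder_edges" "j \<in> Q"
  shows "(Q,LL) \<notin> H"
proof -
  from assms(1) have "H = CY1 \<or> H = CY2a \<or> H = CY2b \<or> H = CY3a \<or> H = CY3b" by (simp add: CYS_def)
  then show ?thesis
    apply (elim disjE) 
    using assms(2-7) by (simp only: lad_iff CY1_def CY2a_def CY2b_def CY3a_def CY3b_def lab.distinct simp_thms;
  elim disjE conjE; hypsubst; simp add: doubleton_eq_iff; (elim disjE conjE)?; simp)+
qed

lemma LC:
  assumes "H \<in> CYS" "(P,Ll) \<in> ladder_edges" "(Q,LL) \<in> ladder_edges" "j \<in> P" "j \<in> Q"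
  shows "(P,Ll) \<in> H \<or> (Q,LL) \<in> H"
proof -
  from assms(1) have "H = CY1 \<or> H = CY2a \<or> H = CY2b \<or> H = CY3a \<or> H = CY3b" by (simp add: CYS_def)
  then show ?thesis
    apply (elim disjE) 
    using assms(2-5) by (simp only: lad_iff CY1_def CY2a_def CY2b_def CY3a_def CY3b_def lab.distinct simp_thms;
  elim disjE conjE; hypsubst; simp add: doubleton_eq_iff; (elim disjE conjE)?; simp)+
qed


definition phi :: "'v cplx \<Rightarrow> 'v \<Rightarrow> 'v set \<Rightarrow> nat" where
 "phi C x = (SOME \<phi>. bij_betw \<phi> (edges_at C x) {0..<8::nat} \<and>
     bij_betw (\<lambda>f. (\<phi> ` corner_edges x f, corner_label x f)) (faces_at (facs C) x) ladder_edges)"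

definition Psi :: "'v cplx \<Rightarrow> 'v \<Rightarrow> 'v face \<Rightarrow> nat set \<times> lab" where
 "Psi C x = (\<lambda>f. (phi C x ` corner_edges x f, corner_label x f))"

definition HH :: "'v cplx \<Rightarrow> 'v face set \<Rightarrow> 'v \<Rightarrow> (nat set \<times> lab) set" where
 "HH C S x = Psi C x ` faces_at S x"

lemma phi_bij:
  assumes "brady_complex C" "x \<in> verts C"
  shows "bij_betw (phi C x) (edges_at C x) {0..<8}" "bij_betw (Psi C x) (faces_at (facs C) x) ladder_edges"
proof -
  from assms have "link_is_ladder C x" by (auto simp: brady_complex_def)
  then have "\<exists>\<phi>. bij_betw \<phi> (edges_at C x) {0..<8::nat} \<and>
     bij_betw (\<lambda>f. (\<phi> ` corner_edges x f, corner_label x f)) (faces_at (facs C) x) ladder_edges"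
    by (simp add: link_is_ladder_def)
  then have "bij_betw (phi C x) (edges_at C x) {0..<8::nat} \<and>
     bij_betw (\<lambda>f. (phi C x ` corner_edges x f, corner_label x f)) (faces_at (facs C) x) ladder_edges"
    unfolding phi_def by (rule someI_ex)
  then show "bij_betw (phi C x) (edges_at C x) {0..<8}" "bij_betw (Psi C x) (faces_at (facs C) x) ladder_edges"
    by (simp_all add: Psi_def)
qed

lemma wf_of: "brady_complex C \<Longrightarrow> wf_cplx C" by (simp add: brady_complex_def)

lemma wf_face: "wf_cplx C \<Longrightarrow> f \<in> facs C \<Longrightarrow> (case f of
         Tri T \<Rightarrow> T \<subseteq> verts C \<and> card T = 3 \<and> (\<forall>e. e \<subseteq> T \<and> card e = 2 \<longrightarrow> e \<in> edgs C)
       | Loz A B \<Rightarrow> A \<union> B \<subseteq> verts C \<and> card A = 2 \<and> card B = 2 \<and> A \<inter> B = {} \<and>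
                    (\<forall>a\<in>A. \<forall>b\<in>B. {a, b} \<in> edgs C))"
  unfolding wf_cplx_def by blast

lemma corner_sub:
  assumes "wf_cplx C" "f \<in> facs C" "x \<in> fverts f"
  shows "corner_edges x f \<subseteq> edges_at C x"
proof (cases f)
  case (Tri T)
  with wf_face[OF assms(1,2)] assms(3) show ?thesis
    by (auto simp: edges_at_def card_insert_if)
next
  case (Loz A B)
  with wf_face[OF assms(1,2)] assms(3) show ?thesis
    by (auto simp: edges_at_def insert_commute)
qed

lemma side_corner:
  assumes "wf_cplx C" "f \<in> facs C" "x \<in> e" "is_side e f"
  shows "x \<in> fverts f \<and> e \<in> corner_edges x f"
proof (cases f)
  case (Tri T)
  with assms have "e \<subseteq> T" "card e = 2" by auto
  then obtain a b where ab: "e = {a,b}" "a \<noteq> b" by (auto simp: card_2_iff)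
  show ?thesis
  proof (cases "x = a")
    case True
    with ab \<open>e \<subseteq> T\<close> Tri show ?thesis by auto
  next
    case False
    with ab assms(3) have "x = b" by auto
    with ab \<open>e \<subseteq> T\<close> Tri show ?thesis by (auto simp: insert_commute)
  qed
next
  case (Loz A B)
  with wf_face[OF assms(1,2)] have dis: "A \<inter> B = {}" by auto
  from Loz assms obtain a b where ab: "a \<in> A" "b \<in> B" "e = {a,b}" by auto
  show ?thesis
  proof (cases "x = a")
    case True
    with ab Loz show ?thesis by auto
  next
    case False
    with ab assms(3) have "x = b" by auto
    with ab dis Loz show ?thesis by (auto simp: insert_commute)
  qed
qed

lemma corner_side:
  assumes "wf_cplx C" "f \<in> facs C" "x \<in> fverts f" "e \<in> corner_edges x f"
  shows "is_side e f \<and> x \<in> e"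
proof (cases f)
  case (Tri T)
  with assms show ?thesis by (auto simp: card_insert_if)
next
  case (Loz A B)
  with assms show ?thesis by (auto simp: split: if_splits)
qed

lemma flip1:
  assumes "is_side {u,v} f" "corner_label u f = LL"
  shows "corner_label v f = Ll"
proof (cases f)
  case (Tri T) with assms show ?thesis by simp
next
  case (Loz A B)
  with assms obtain a b where "a \<in> A" "b \<in> B" "{u,v} = {a,b}" "u \<notin> A" by (auto split: if_splits)
  then have "v \<in> A" by (metis doubleton_eq_iff)
  with Loz show ?thesis by simp
qed

lemma flip2:
  assumes "wf_cplx C" "f \<in> facs C" "is_side {u,v} f" "corner_label u f = Ll"
  shows "corner_label v f = LL"
proof (cases f)
  case (Tri T) with assms show ?thesis by simp
next
  case (Loz A B)
  with wf_face[OF assms(1,2)] have dis: "A \<inter> B = {}" by auto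
  from Loz assms obtain a b where "a \<in> A" "b \<in> B" "{u,v} = {a,b}" "u \<in> A" by (auto split: if_splits)
  with dis have "v \<in> B" "v \<notin> A" by (auto simp: doubleton_eq_iff)
  with Loz show ?thesis by simp
qed

context
  fixes C :: "'v cplx" and S :: "'v face set"
  assumes B: "brady_complex C" and Hm: "hamiltonian_surface C S"
begin

lemma wf: "wf_cplx C" using B by (rule wf_of)

lemma SsubF: "S \<subseteq> facs C" using Hm by (simp add: hamiltonian_surface_def)

lemma Psi_in: "x \<in> verts C \<Longrightarrow> f \<in> facs C \<Longrightarrow> x \<in> fverts f \<Longrightarrow> Psi C x f \<in> ladder_edges"
proof -
  assume x: "x \<in> verts C" and f: "f \<in> facs C" "x \<in> fverts f"
  then have "f \<in> faces_at (facs C) x" by (simp add: faces_at_def)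
  then show ?thesis by (rule bij_betw_apply[OF phi_bij(2)[OF B x]])
qed

lemma Psi_inj: "x \<in> verts C \<Longrightarrow> f \<in> facs C \<Longrightarrow> x \<in> fverts f \<Longrightarrow> g \<in> facs C \<Longrightarrow> x \<in> fverts g
   \<Longrightarrow> Psi C x f = Psi C x g \<Longrightarrow> f = g"
proof -
  assume x: "x \<in> verts C" and f: "f \<in> facs C" "x \<in> fverts f" and g: "g \<in> facs C" "x \<in> fverts g"
    and e: "Psi C x f = Psi C x g"
  from f have f': "f \<in> faces_at (facs C) x" by (simp add: faces_at_def)
  from g have g': "g \<in> faces_at (facs C) x" by (simp add: faces_at_def)
  show "f = g" by (rule inj_onD[OF bij_betw_imp_inj_on[OF phi_bij(2)[OF B x]] e f' g'])
qed

lemma Psi_surj: "x \<in> verts C \<Longrightarrow> p \<in> ladder_edges \<Longrightarrow> \<exists>f. f \<in> facs C \<and> x \<in> fverts f \<and> Psi C x f = p"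
proof -
  assume x: "x \<in> verts C" and p: "p \<in> ladder_edges"
  have "Psi C x ` faces_at (facs C) x = ladder_edges" by (rule bij_betw_imp_surj_on[OF phi_bij(2)[OF B x]])
  with p obtain f where "f \<in> faces_at (facs C) x" "Psi C x f = p" by (metis imageE)
  then show ?thesis by (auto simp: faces_at_def)
qed

lemma phi_lt: "x \<in> verts C \<Longrightarrow> e \<in> edges_at C x \<Longrightarrow> phi C x e < 8"
  using bij_betw_apply[OF phi_bij(1)[OF B]] by auto

lemma phi_surj: "x \<in> verts C \<Longrightarrow> i < 8 \<Longrightarrow> \<exists>e\<in>edges_at C x. phi C x e = i"
  using phi_bij(1)[OF B] unfolding bij_betw_def by (metis atLeastLessThan_iff imageE zero_le)

lemma phi_inj: "x \<in> verts C \<Longrightarrow> e \<in> edges_at C x \<Longrightarrow> e' \<in> edges_at C x \<Longrightarrow> phi C x e = phi C x e' \<Longrightarrow> e = e'"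
  using phi_bij(1)[OF B] unfolding bij_betw_def inj_on_def by blast

lemma label_Psi: "snd (Psi C x f) = corner_label x f" by (simp add: Psi_def)

lemma corner_iff:
  assumes "x \<in> verts C" "f \<in> facs C" "x \<in> fverts f" "e \<in> edges_at C x"
  shows "e \<in> corner_edges x f \<longleftrightarrow> phi C x e \<in> fst (Psi C x f)"
proof
  assume "e \<in> corner_edges x f" then show "phi C x e \<in> fst (Psi C x f)" by (simp add: Psi_def)
next
  assume "phi C x e \<in> fst (Psi C x f)"
  then obtain e' where "e' \<in> corner_edges x f" "phi C x e = phi C x e'" by (auto simp: Psi_def)
  moreover have "e' \<in> edges_at C x" using corner_sub[OF wf assms(2,3)] \<open>e' \<in> corner_edges x f\<close> by auto
  ultimately show "e \<in> corner_edges x f" using phi_inj[OF assms(1) assms(4)] by metis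
qed

lemma inS:
  assumes "x \<in> verts C" "f \<in> facs C" "x \<in> fverts f"
  shows "f \<in> S \<longleftrightarrow> Psi C x f \<in> HH C S x"
proof
  assume "f \<in> S" then show "Psi C x f \<in> HH C S x" using assms by (auto simp: HH_def faces_at_def)
next
  assume "Psi C x f \<in> HH C S x"
  then obtain g where "g \<in> S" "x \<in> fverts g" "Psi C x g = Psi C x f" by (auto simp: HH_def faces_at_def)
  with Psi_inj[OF assms(1) _ _ assms(2,3)] SsubF show "f \<in> S" by auto
qed

lemma HH_sub: "x \<in> verts C \<Longrightarrow> HH C S x \<subseteq> ladder_edges"
  using Psi_in SsubF by (auto simp: HH_def faces_at_def)

lemma cover: "x \<in> verts C \<Longrightarrow> e \<in> edges_at C x \<Longrightarrow> \<exists>f\<in>faces_at S x. e \<in> corner_edges x f"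
proof -
  assume x: "x \<in> verts C" and e: "e \<in> edges_at C x"
  from e have "e \<in> edgs C" by (simp add: edges_at_def)
  with Hm obtain f where "f \<in> S" "is_side e f" unfolding hamiltonian_surface_def by blast
  with side_corner[OF wf, of f x e] SsubF e show ?thesis by (auto simp: faces_at_def edges_at_def)
qed

lemma lsc: "x \<in> verts C \<Longrightarrow> link_single_cycle S x"
  using Hm by (simp add: hamiltonian_surface_def)

lemma deg2: "x \<in> verts C \<Longrightarrow> \<forall>i<8. card {h\<in>HH C S x. i \<in> fst h} = (2::nat)"
proof (intro allI impI)
  fix i :: nat assume x: "x \<in> verts C" and i: "i < 8"
  obtain e where e: "e \<in> edges_at C x" "phi C x e = i" using phi_surj[OF x i] by auto
  have Vx: "e \<in> \<Union> (corner_edges x ` faces_at S x)" using cover[OF x e(1)] by auto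
  from lsc[OF x] Vx have c: "card {f\<in>faces_at S x. e \<in> corner_edges x f} = 2"
    unfolding link_single_cycle_def Let_def by blast
  have fsub: "faces_at S x \<subseteq> faces_at (facs C) x" using SsubF by (auto simp: faces_at_def)
  have im: "{h\<in>HH C S x. i \<in> fst h} = Psi C x ` {f\<in>faces_at S x. e \<in> corner_edges x f}"
  proof -
    have "\<And>f. f \<in> faces_at S x \<Longrightarrow> e \<in> corner_edges x f \<longleftrightarrow> i \<in> fst (Psi C x f)"
      using corner_iff[OF x _ _ e(1)] fsub e(2) by (auto simp: faces_at_def)
    then show ?thesis by (auto simp: HH_def)
  qed
  have "inj_on (Psi C x) {f\<in>faces_at S x. e \<in> corner_edges x f}"
    using Psi_inj[OF x] fsub by (auto simp: inj_on_def faces_at_def)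
  then show "card {h\<in>HH C S x. i \<in> fst h} = 2" using im c by (simp add: card_image)
qed

lemma conn:
  assumes x: "x \<in> verts C" and ij: "i \<in> K" "j \<notin> K" "i < 8" "j < 8"
  shows "\<not> (\<forall>h\<in>HH C S x. fst h \<subseteq> K \<or> fst h \<inter> K = {})"
proof
  assume nc: "\<forall>h\<in>HH C S x. fst h \<subseteq> K \<or> fst h \<inter> K = {}"
  obtain ei where ei: "ei \<in> edges_at C x" "phi C x ei = i" using phi_surj[OF x ij(3)] by auto
  obtain ej where ej: "ej \<in> edges_at C x" "phi C x ej = j" using phi_surj[OF x ij(4)] by auto
  let ?R = "{(e, e'). \<exists>f\<in>faces_at S x. corner_edges x f = {e, e'}}"
  have Vi: "ei \<in> \<Union> (corner_edges x ` faces_at S x)" using cover[OF x ei(1)] by auto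
  have Vj: "ej \<in> \<Union> (corner_edges x ` faces_at S x)" using cover[OF x ej(1)] by auto
  from lsc[OF x] Vi Vj have "(ei, ej) \<in> ?R\<^sup>*"
    unfolding link_single_cycle_def Let_def by blast
  then have "ej \<in> edges_at C x \<and> phi C x ej \<in> K"
  proof (induction rule: rtrancl_induct)
    case base then show ?case using ei ij by auto
  next
    case (step b c)
    then obtain f where f: "f \<in> faces_at S x" "corner_edges x f = {b, c}" by auto
    then have ff: "f \<in> facs C" "x \<in> fverts f" using SsubF by (auto simp: faces_at_def)
    have "Psi C x f \<in> HH C S x" using f by (auto simp: HH_def)
    moreover have fst: "fst (Psi C x f) = {phi C x b, phi C x c}" using f by (simp add: Psi_def)
    ultimately have "{phi C x b, phi C x c} \<subseteq> K \<or> {phi C x b, phi C x c} \<inter> K = {}" using nc by metis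
    with step.IH have "phi C x c \<in> K" by auto
    moreover have "c \<in> edges_at C x" using corner_sub[OF wf ff] f by auto
    ultimately show ?case by auto
  qed
  with ej ij show False by auto
qed

lemma HH_CYS: "x \<in> verts C \<Longrightarrow> HH C S x \<in> CYS"
proof -
  assume x: "x \<in> verts C"
  have sub: "HH C S x \<subseteq> ladder_edges" using HH_sub[OF x] .
  have t: "\<exists>h\<in>HH C S x. snd h = Lt"
  proof (rule ccontr)
    assume "\<not> ?thesis"
    then have nt: "\<forall>h\<in>HH C S x. snd h \<noteq> Lt" by auto
    have "\<forall>h\<in>HH C S x. fst h \<subseteq> {0,1,4,5} \<or> fst h \<inter> {0,1,4,5} = {}"
    proof (intro ballI)
      fix h assume h: "h \<in> HH C S x"
      obtain P c where Pc: "h = (P,c)" by (cases h)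
      have "(P,c) \<in> ladder_edges" "c \<noteq> Lt" using h nt sub Pc by auto
      then show "fst h \<subseteq> {0,1,4,5} \<or> fst h \<inter> {0,1,4,5} = {}" unfolding Pc fst_conv lad_iff
        by (elim disjE conjE; hypsubst; simp)
    qed
    moreover have "\<not> (\<forall>h\<in>HH C S x. fst h \<subseteq> {0,1,4,5} \<or> fst h \<inter> {0,1,4,5} = {})"
      by (rule conn[OF x, of 0 _ 2]) simp_all
    ultimately show False by blast
  qed
  have l: "\<exists>h\<in>HH C S x. snd h = Ll"
  proof (rule ccontr)
    assume "\<not> ?thesis"
    then have nt: "\<forall>h\<in>HH C S x. snd h \<noteq> Ll" by auto
    have "\<forall>h\<in>HH C S x. fst h \<subseteq> {1,2,5,6} \<or> fst h \<inter> {1,2,5,6} = {}"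
    proof (intro ballI)
      fix h assume h: "h \<in> HH C S x"
      obtain P c where Pc: "h = (P,c)" by (cases h)
      have "(P,c) \<in> ladder_edges" "c \<noteq> Ll" using h nt sub Pc by auto
      then show "fst h \<subseteq> {1,2,5,6} \<or> fst h \<inter> {1,2,5,6} = {}" unfolding Pc fst_conv lad_iff
        by (elim disjE conjE; hypsubst; simp)
    qed
    moreover have "\<not> (\<forall>h\<in>HH C S x. fst h \<subseteq> {1,2,5,6} \<or> fst h \<inter> {1,2,5,6} = {})"
      by (rule conn[OF x, of 1 _ 0]) simp_all
    ultimately show False by blast
  qed
  have "HH C S x = CY1 \<or> HH C S x = CY2a \<or> HH C S x = CY2b \<or> HH C S x = CY3a \<or> HH C S x = CY3b"
    by (rule enum[OF sub deg2[OF x] t l])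
  then show ?thesis unfolding CYS_def by blast
qed

end

lemma lad_lt: "(P,c) \<in> ladder_edges \<Longrightarrow> k \<in> P \<Longrightarrow> k < 8"
  unfolding lad_iff by (elim disjE conjE; hypsubst; auto)

lemma lt8: "i < (8::nat) \<Longrightarrow> i = 0 \<or> i = 1 \<or> i = 2 \<or> i = 3 \<or> i = 4 \<or> i = 5 \<or> i = 6 \<or> i = 7" by auto

lemma ex_rung: "i < 8 \<Longrightarrow> \<exists>Q. (Q,LL) \<in> ladder_edges \<and> i \<in> Q"
  apply (drule lt8) apply (elim disjE; hypsubst)
    subgoal by (rule exI[of _ "{0,4}"]) (simp add: ladder_edges_def)
    subgoal by (rule exI[of _ "{1,5}"]) (simp add: ladder_edges_def)
    subgoal by (rule exI[of _ "{2,6}"]) (simp add: ladder_edges_def)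
    subgoal by (rule exI[of _ "{3,7}"]) (simp add: ladder_edges_def)
    subgoal by (rule exI[of _ "{0,4}"]) (simp add: ladder_edges_def)
    subgoal by (rule exI[of _ "{1,5}"]) (simp add: ladder_edges_def)
    subgoal by (rule exI[of _ "{2,6}"]) (simp add: ladder_edges_def)
    subgoal by (rule exI[of _ "{3,7}"]) (simp add: ladder_edges_def)
  done

lemma ex_ell: "i < 8 \<Longrightarrow> \<exists>Q. (Q,Ll) \<in> ladder_edges \<and> i \<in> Q"
  apply (drule lt8) apply (elim disjE; hypsubst)
    subgoal by (rule exI[of _ "{0,1}"]) (simp add: ladder_edges_def)
    subgoal by (rule exI[of _ "{0,1}"]) (simp add: ladder_edges_def)
    subgoal by (rule exI[of _ "{2,3}"]) (simp add: ladder_edges_def)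
    subgoal by (rule exI[of _ "{2,3}"]) (simp add: ladder_edges_def)
    subgoal by (rule exI[of _ "{4,5}"]) (simp add: ladder_edges_def)
    subgoal by (rule exI[of _ "{4,5}"]) (simp add: ladder_edges_def)
    subgoal by (rule exI[of _ "{6,7}"]) (simp add: ladder_edges_def)
    subgoal by (rule exI[of _ "{6,7}"]) (simp add: ladder_edges_def)
  done

lemma tri_corner: "x \<noteq> y \<Longrightarrow> y \<noteq> z \<Longrightarrow> x \<noteq> z \<Longrightarrow> corner_edges y (Tri {x,y,z}) = {{x,y},{y,z}}"
proof -
  assume d: "x \<noteq> y" "y \<noteq> z" "x \<noteq> z"
  then have "{x,y,z} - {y} = {x,z}" by auto
  then show ?thesis by (auto simp: insert_commute)
qed

context
  fixes C :: "'v cplx" and S :: "'v face set"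
  assumes B: "brady_complex C" and Hm: "hamiltonian_surface C S"
begin

lemma wf': "wf_cplx C" using B by (rule wf_of)

lemma type3I:
  assumes x: "x \<in> verts C" and H: "HH C S x = CY3a \<or> HH C S x = CY3b"
  shows "type3 S x"
proof -
  define g where "g = inv_into (faces_at (facs C) x) (Psi C x)"
  have bj: "bij_betw (Psi C x) (faces_at (facs C) x) ladder_edges" by (rule phi_bij(2)[OF B x])
  have im: "Psi C x ` faces_at (facs C) x = ladder_edges" by (rule bij_betw_imp_surj_on[OF bj])
  have inj: "inj_on (Psi C x) (faces_at (facs C) x)" by (rule bij_betw_imp_inj_on[OF bj])
  have g_in: "g h \<in> faces_at (facs C) x" if "h \<in> ladder_edges" for h
    unfolding g_def using that im by (metis inv_into_into)
  have Psi_g: "Psi C x (g h) = h" if "h \<in> ladder_edges" for h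
    unfolding g_def using that im by (metis f_inv_into_f)
  have g_inj: "inj_on g ladder_edges" unfolding g_def using im by (metis inj_on_inv_into order_refl)
  have fsub: "faces_at S x \<subseteq> faces_at (facs C) x" using SsubF[OF B Hm] by (auto simp: faces_at_def)
  have FS: "faces_at S x = g ` HH C S x"
  proof
    show "faces_at S x \<subseteq> g ` HH C S x"
    proof
      fix f assume f: "f \<in> faces_at S x"
      then have "g (Psi C x f) = f" unfolding g_def using fsub inj by (metis inv_into_f_f subsetD)
      moreover have "Psi C x f \<in> HH C S x" using f by (simp add: HH_def)
      ultimately show "f \<in> g ` HH C S x" by (metis imageI)
    qed
  next
    show "g ` HH C S x \<subseteq> faces_at S x"
    proof
      fix f assume "f \<in> g ` HH C S x"
      then obtain f' where f': "f' \<in> faces_at S x" "f = g (Psi C x f')" by (auto simp: HH_def)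
      then have "g (Psi C x f') = f'" unfolding g_def using fsub inj by (metis inv_into_f_f subsetD)
      with f' show "f \<in> faces_at S x" by simp
    qed
  qed
  have lab: "corner_label x (g h) = snd h" if "h \<in> ladder_edges" for h
    using Psi_g[OF that] label_Psi[OF B Hm] by metis
  have gf: "g h \<in> facs C" "x \<in> fverts (g h)" if "h \<in> ladder_edges" for h
    using g_in[OF that] by (auto simp: faces_at_def)
  have adj: "link_adj x (g h) (g h')" if "h \<in> ladder_edges" "h' \<in> ladder_edges" "k \<in> fst h" "k \<in> fst h'" for h h' k
  proof -
    have "k < 8" using that(1,3) lad_lt by (metis prod.collapse)
    then obtain e where e: "e \<in> edges_at C x" "phi C x e = k" using phi_surj[OF B Hm x] by auto
    have "e \<in> corner_edges x (g h)" using corner_iff[OF B Hm x gf[OF that(1)] e(1)] Psi_g[OF that(1)] e(2) that(3) by simp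
    moreover have "e \<in> corner_edges x (g h')" using corner_iff[OF B Hm x gf[OF that(2)] e(1)] Psi_g[OF that(2)] e(2) that(4) by simp
    ultimately show ?thesis unfolding link_adj_def by blast
  qed
  from H show ?thesis
  proof
    assume H3: "HH C S x = CY3a"
    let ?r1 = "({0::nat,4},LL)" and ?r2 = "({1::nat,5},LL)" and ?a1 = "({3::nat,4},Lt)" and ?a2 = "({2::nat,3},Ll)"
      and ?a3 = "({1::nat,2},Lt)" and ?b1 = "({5::nat,6},Lt)" and ?b2 = "({6::nat,7},Ll)" and ?b3 = "({7::nat,0},Lt)"
    have L: "?r1 \<in> ladder_edges" "?r2 \<in> ladder_edges" "?a1 \<in> ladder_edges" "?a2 \<in> ladder_edges"
      "?a3 \<in> ladder_edges" "?b1 \<in> ladder_edges" "?b2 \<in> ladder_edges" "?b3 \<in> ladder_edges"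
      by (simp_all add: ladder_edges_def)
    have dl: "distinct [?r1, ?r2, ?a1, ?a2, ?a3, ?b1, ?b2, ?b3]" by (simp add: doubleton_eq_iff)
    have sl: "set [?r1, ?r2, ?a1, ?a2, ?a3, ?b1, ?b2, ?b3] \<subseteq> ladder_edges" using L by simp
    have dg: "distinct (map g [?r1, ?r2, ?a1, ?a2, ?a3, ?b1, ?b2, ?b3])"
      using dl inj_on_subset[OF g_inj sl] by (simp add: distinct_map)
    show ?thesis unfolding type3_def
      apply (rule exI[of _ "g ?r1"], rule exI[of _ "g ?r2"], rule exI[of _ "g ?a1"], rule exI[of _ "g ?a2"],
             rule exI[of _ "g ?a3"], rule exI[of _ "g ?b1"], rule exI[of _ "g ?b2"], rule exI[of _ "g ?b3"])
      apply (intro conjI)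
      subgoal unfolding FS H3 CY3a_def by simp
      subgoal using dg by simp
      subgoal using lab[OF L(1)] by simp
      subgoal using lab[OF L(2)] by simp
      subgoal using lab[OF L(3)] by simp
      subgoal using lab[OF L(4)] by simp
      subgoal using lab[OF L(5)] by simp
      subgoal using lab[OF L(6)] by simp
      subgoal using lab[OF L(7)] by simp
      subgoal using lab[OF L(8)] by simp
      subgoal by (rule adj[OF L(1) L(3), of 4]) simp_all
      subgoal by (rule adj[OF L(3) L(4), of 3]) simp_all
      subgoal by (rule adj[OF L(4) L(5), of 2]) simp_all
      subgoal by (rule adj[OF L(5) L(2), of 1]) simp_all
      subgoal by (rule adj[OF L(2) L(6), of 5]) simp_all
      subgoal by (rule adj[OF L(6) L(7), of 6]) simp_all
      subgoal by (rule adj[OF L(7) L(8), of 7]) simp_all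
      subgoal by (rule adj[OF L(8) L(1), of 0]) simp_all
      done
  next
    assume H3: "HH C S x = CY3b"
    let ?r1 = "({2::nat,6},LL)" and ?r2 = "({3::nat,7},LL)" and ?a1 = "({5::nat,6},Lt)" and ?a2 = "({4::nat,5},Ll)"
      and ?a3 = "({3::nat,4},Lt)" and ?b1 = "({7::nat,0},Lt)" and ?b2 = "({0::nat,1},Ll)" and ?b3 = "({1::nat,2},Lt)"
    have L: "?r1 \<in> ladder_edges" "?r2 \<in> ladder_edges" "?a1 \<in> ladder_edges" "?a2 \<in> ladder_edges"
      "?a3 \<in> ladder_edges" "?b1 \<in> ladder_edges" "?b2 \<in> ladder_edges" "?b3 \<in> ladder_edges"
      by (simp_all add: ladder_edges_def)
    have dl: "distinct [?r1, ?r2, ?a1, ?a2, ?a3, ?b1, ?b2, ?b3]" by (simp add: doubleton_eq_iff)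
    have sl: "set [?r1, ?r2, ?a1, ?a2, ?a3, ?b1, ?b2, ?b3] \<subseteq> ladder_edges" using L by simp
    have dg: "distinct (map g [?r1, ?r2, ?a1, ?a2, ?a3, ?b1, ?b2, ?b3])"
      using dl inj_on_subset[OF g_inj sl] by (simp add: distinct_map)
    show ?thesis unfolding type3_def
      apply (rule exI[of _ "g ?r1"], rule exI[of _ "g ?r2"], rule exI[of _ "g ?a1"], rule exI[of _ "g ?a2"],
             rule exI[of _ "g ?a3"], rule exI[of _ "g ?b1"], rule exI[of _ "g ?b2"], rule exI[of _ "g ?b3"])
      apply (intro conjI)
      subgoal unfolding FS H3 CY3b_def by simp
      subgoal using dg by simp
      subgoal using lab[OF L(1)] by simp
      subgoal using lab[OF L(2)] by simp
      subgoal using lab[OF L(3)] by simp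
      subgoal using lab[OF L(4)] by simp
      subgoal using lab[OF L(5)] by simp
      subgoal using lab[OF L(6)] by simp
      subgoal using lab[OF L(7)] by simp
      subgoal using lab[OF L(8)] by simp
      subgoal by (rule adj[OF L(1) L(3), of 6]) simp_all
      subgoal by (rule adj[OF L(3) L(4), of 5]) simp_all
      subgoal by (rule adj[OF L(4) L(5), of 4]) simp_all
      subgoal by (rule adj[OF L(5) L(2), of 3]) simp_all
      subgoal by (rule adj[OF L(2) L(6), of 7]) simp_all
      subgoal by (rule adj[OF L(6) L(7), of 0]) simp_all
      subgoal by (rule adj[OF L(7) L(8), of 1]) simp_all
      subgoal by (rule adj[OF L(8) L(1), of 2]) simp_all
      done
  qed
qed

lemma propagate:
  assumes y: "y \<in> verts C" and T: "Tri {x,y,z} \<in> facs C" and d: "x \<noteq> y" "y \<noteq> z" "x \<noteq> z"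
   and R: "R \<in> facs C" "x \<in> fverts R" "{x,y} \<in> corner_edges x R" "corner_label x R = LL" "R \<notin> S"
   and G: "G \<in> facs C" "y \<in> fverts G" "{y,z} \<in> corner_edges y G" "corner_label y G = LL"
  shows "G \<notin> S"
proof
  assume GS: "G \<in> S"
  have sR: "is_side {x,y} R" using corner_side[OF wf' R(1,2,3)] by simp
  have Ry: "y \<in> fverts R" "{x,y} \<in> corner_edges y R" using side_corner[OF wf' R(1) _ sR] by auto
  have lRy: "corner_label y R = Ll" by (rule flip1[OF sR R(4)])
  have eyx: "{x,y} \<in> edges_at C y" using corner_sub[OF wf' R(1) Ry(1)] Ry(2) by auto
  have eyz: "{y,z} \<in> edges_at C y" using corner_sub[OF wf' G(1,2)] G(3) by auto
  obtain P where P: "Psi C y R = (P, Ll)" using lRy by (metis label_Psi[OF B Hm] prod.collapse)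
  have Pin: "(P,Ll) \<in> ladder_edges" using Psi_in[OF B Hm y R(1) Ry(1)] P by simp
  have iP: "phi C y {x,y} \<in> P" using corner_iff[OF B Hm y R(1) Ry(1) eyx] Ry(2) P by simp
  have PnH: "(P,Ll) \<notin> HH C S y" using inS[OF B Hm y R(1) Ry(1)] R(5) P by simp
  have yT: "y \<in> fverts (Tri {x,y,z})" by simp
  have PsiT: "Psi C y (Tri {x,y,z}) = ({phi C y {x,y}, phi C y {y,z}}, Lt)"
    using tri_corner[OF d] by (simp add: Psi_def)
  have Tin: "({phi C y {x,y}, phi C y {y,z}}, Lt) \<in> ladder_edges" using Psi_in[OF B Hm y T yT] PsiT by simp
  obtain Q where Q: "Psi C y G = (Q, LL)" using G(4) by (metis label_Psi[OF B Hm] prod.collapse)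
  have Qin: "(Q,LL) \<in> ladder_edges" using Psi_in[OF B Hm y G(1,2)] Q by simp
  have jQ: "phi C y {y,z} \<in> Q" using corner_iff[OF B Hm y G(1,2) eyz] G(3) Q by simp
  have "(Q,LL) \<notin> HH C S y" by (rule LB[OF HH_CYS[OF B Hm y] Pin iP PnH Tin Qin jQ])
  moreover have "(Q,LL) \<in> HH C S y" using inS[OF B Hm y G(1,2)] GS Q by simp
  ultimately show False by simp
qed

lemma mc:
  assumes x: "x \<in> verts C" and t: "({i,j},Lt) \<in> ladder_edges"
    and Qi: "(Qi,LL) \<in> ladder_edges" "i \<in> Qi" "(Qi,LL) \<notin> HH C S x"
    and Qj: "(Qj,LL) \<in> ladder_edges" "j \<in> Qj" "(Qj,LL) \<notin> HH C S x"
  shows False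
proof -
  obtain fT where fT: "fT \<in> facs C" "x \<in> fverts fT" "Psi C x fT = ({i,j},Lt)" using Psi_surj[OF B Hm x t] by auto
  have "corner_label x fT = Lt" using fT(3) label_Psi[OF B Hm] by (metis snd_conv)
  then obtain T where fTT: "fT = Tri T" by (cases fT) (auto split: if_splits)
  have ij: "i \<noteq> j"
  proof
    assume "i = j"
    with t have "({i},Lt) \<in> ladder_edges" by simp
    then show False unfolding lad_iff by (elim disjE conjE; auto)
  qed
  have ilt: "i < 8" "j < 8" using lad_lt[OF t] by auto
  obtain ei where ei: "ei \<in> edges_at C x" "phi C x ei = i" using phi_surj[OF B Hm x ilt(1)] by auto
  obtain ej where ej: "ej \<in> edges_at C x" "phi C x ej = j" using phi_surj[OF B Hm x ilt(2)] by auto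
  have eiT: "ei \<in> corner_edges x fT" using corner_iff[OF B Hm x fT(1,2) ei(1)] fT(3) ei(2) by simp
  have ejT: "ej \<in> corner_edges x fT" using corner_iff[OF B Hm x fT(1,2) ej(1)] fT(3) ej(2) by simp
  from eiT fTT obtain y where y: "y \<in> T" "y \<noteq> x" "ei = {x,y}" by auto
  from ejT fTT obtain z where z: "z \<in> T" "z \<noteq> x" "ej = {x,z}" by auto
  have yz: "y \<noteq> z" using y z ei ej ij by auto
  have wfT: "T \<subseteq> verts C" "card T = 3" using wf_face[OF wf' fT(1)] fTT by auto
  have xT: "x \<in> T" using fT(2) fTT by simp
  have Teq: "T = {x,y,z}"
  proof (rule sym, rule card_subset_eq)
    show "finite T" using wfT(2) by (metis card.infinite zero_neq_numeral)
    show "{x,y,z} \<subseteq> T" using xT y z by auto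
    show "card {x,y,z} = card T" using wfT(2) y z yz by auto
  qed
  have Tf: "Tri {x,y,z} \<in> facs C" using fT(1) fTT Teq by simp
  have Tf': "Tri {x,z,y} \<in> facs C" using Tf by (simp add: insert_commute)
  have yv: "y \<in> verts C" "z \<in> verts C" using wfT y z by auto
  obtain Ri where Ri: "Ri \<in> facs C" "x \<in> fverts Ri" "Psi C x Ri = (Qi,LL)" using Psi_surj[OF B Hm x Qi(1)] by auto
  have Ri2: "corner_label x Ri = LL" using Ri(3) label_Psi[OF B Hm] by (metis snd_conv)
  have Ri3: "{x,y} \<in> corner_edges x Ri" using corner_iff[OF B Hm x Ri(1,2) ei(1)] Ri(3) ei(2) Qi(2) y(3) by simp
  have Ri4: "Ri \<notin> S" using inS[OF B Hm x Ri(1,2)] Ri(3) Qi(3) by simp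
  obtain Rj where Rj: "Rj \<in> facs C" "x \<in> fverts Rj" "Psi C x Rj = (Qj,LL)" using Psi_surj[OF B Hm x Qj(1)] by auto
  have Rj2: "corner_label x Rj = LL" using Rj(3) label_Psi[OF B Hm] by (metis snd_conv)
  have Rj3: "{x,z} \<in> corner_edges x Rj" using corner_iff[OF B Hm x Rj(1,2) ej(1)] Rj(3) ej(2) Qj(2) z(3) by simp
  have Rj4: "Rj \<notin> S" using inS[OF B Hm x Rj(1,2)] Rj(3) Qj(3) by simp
  have PG: "G \<notin> S" if "G \<in> facs C" "y \<in> fverts G" "{y,z} \<in> corner_edges y G" "corner_label y G = LL" for G
    by (rule propagate[OF yv(1) Tf y(2)[symmetric] yz _ Ri(1,2) Ri3 Ri2 Ri4 that]) (use z in auto)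
  have PG2: "G \<notin> S" if "G \<in> facs C" "z \<in> fverts G" "{z,y} \<in> corner_edges z G" "corner_label z G = LL" for G
    by (rule propagate[OF yv(2) Tf' z(2)[symmetric] yz[symmetric] _ Rj(1,2) Rj3 Rj2 Rj4 that]) (use y in auto)
  have yTf: "y \<in> fverts (Tri {x,y,z})" by simp
  have dyz: "{y,z} \<in> edges_at C y" using corner_sub[OF wf' Tf yTf] tri_corner[OF y(2)[symmetric] yz] z(2) by auto
  define jy where "jy = phi C y {y,z}"
  have jlt: "jy < 8" unfolding jy_def by (rule phi_lt[OF B Hm yv(1) dyz])
  obtain Q where Q: "(Q,LL) \<in> ladder_edges" "jy \<in> Q" using ex_rung[OF jlt] by auto
  obtain P where P: "(P,Ll) \<in> ladder_edges" "jy \<in> P" using ex_ell[OF jlt] by auto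
  obtain G where G: "G \<in> facs C" "y \<in> fverts G" "Psi C y G = (Q,LL)" using Psi_surj[OF B Hm yv(1) Q(1)] by auto
  have G2: "corner_label y G = LL" using G(3) label_Psi[OF B Hm] by (metis snd_conv)
  have G3: "{y,z} \<in> corner_edges y G" using corner_iff[OF B Hm yv(1) G(1,2) dyz] G(3) Q(2) jy_def by simp
  have "G \<notin> S" by (rule PG[OF G(1,2) G3 G2])
  then have QH: "(Q,LL) \<notin> HH C S y" using inS[OF B Hm yv(1) G(1,2)] G(3) by simp
  obtain G' where G': "G' \<in> facs C" "y \<in> fverts G'" "Psi C y G' = (P,Ll)" using Psi_surj[OF B Hm yv(1) P(1)] by auto
  have G'2: "corner_label y G' = Ll" using G'(3) label_Psi[OF B Hm] by (metis snd_conv)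
  have G'3: "{y,z} \<in> corner_edges y G'" using corner_iff[OF B Hm yv(1) G'(1,2) dyz] G'(3) P(2) jy_def by simp
  have sG': "is_side {y,z} G'" using corner_side[OF wf' G'(1,2) G'3] by simp
  have zG': "z \<in> fverts G'" "{y,z} \<in> corner_edges z G'" using side_corner[OF wf' G'(1) _ sG'] by auto
  have G'z: "corner_label z G' = LL" by (rule flip2[OF wf' G'(1) sG' G'2])
  have "G' \<notin> S" by (rule PG2[OF G'(1) zG'(1) _ G'z]) (use zG'(2) in \<open>simp add: insert_commute\<close>)
  then have PH: "(P,Ll) \<notin> HH C S y" using inS[OF B Hm yv(1) G'(1,2)] G'(3) by simp
  from LC[OF HH_CYS[OF B Hm yv(1)] P(1) Q(1) P(2) Q(2)] PH QH show False by simp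
qed

end

theorem mainTheorem5:
  fixes C :: "'v cplx" and S :: "'v face set"
  assumes "brady_complex C"
    and "hamiltonian_surface C S"
  shows "\<forall>x\<in>verts C. type3 S x"
proof
  fix x assume x: "x \<in> verts C"
  note B = assms(1) and Hm = assms(2)
  have "HH C S x \<in> CYS" by (rule HH_CYS[OF B Hm x])
  then have "HH C S x = CY1 \<or> HH C S x = CY2a \<or> HH C S x = CY2b \<or> HH C S x = CY3a \<or> HH C S x = CY3b"
    unfolding CYS_def by (simp only: insert_iff empty_iff simp_thms)
  then show "type3 S x"
  proof (elim disjE)
    assume H: "HH C S x = CY1"
    show ?thesis
      by (rule FalseE, rule mc[OF B Hm x, of 7 0 "{3,7}" "{0,4}"])
         (simp_all add: H CY1_def ladder_edges_def doubleton_eq_iff)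
  next
    assume H: "HH C S x = CY2a"
    show ?thesis
      by (rule FalseE, rule mc[OF B Hm x, of 7 0 "{3,7}" "{0,4}"])
         (simp_all add: H CY2a_def ladder_edges_def doubleton_eq_iff)
  next
    assume H: "HH C S x = CY2b"
    show ?thesis
      by (rule FalseE, rule mc[OF B Hm x, of 1 2 "{1,5}" "{2,6}"])
         (simp_all add: H CY2b_def ladder_edges_def doubleton_eq_iff)
  next
    assume H: "HH C S x = CY3a"
    then show ?thesis using type3I[OF B Hm x] by blast
  next
    assume H: "HH C S x = CY3b"
    then show ?thesis using type3I[OF B Hm x] by blast
  qed
qed

end
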